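(* Let $d\ge1$, let $\mathcal{H}_R,\mathcal{H}_A,\mathcal{H}_B$ all be copies of $\mathbb{C}^d$ with standard basis $\{|j\rangle\}_{j=0}^{d-1}$, and let $\mathcal{N}:\mathcal{L}(\mathcal{H}_A)\to\mathcal{L}(\mathcal{H}_B)$ be a quantum channel (completely positive trace-preserving map). Let $\{K_i\}$ be a standard Kraus decomposition of $\mathcal{N}$ (defined in the context), so that $\mathrm{Tr}(K_0^\dagger K_0)\ge \mathrm{Tr}(K_i^\dagger K_i)$ for all $i$. Define $$\mathcal{O}(\mathcal{N}):=\max\Big\{\langle\phi|_{RB}\,(\mathcal{I}_R\otimes\mathcal{N})(\rho_{RA})\,|\phi\rangle_{RB}\;:\;\rho_{RA}\succeq0,\ \mathrm{Tr}\rho_{RA}=1\Big\},$$ where $|\phi\rangle_{RB}=\frac1{\sqrt d}\sum_j|j\rangle_R|j\rangle_B$ and $\mathcal{I}_R$ is the identity map on $\mathcal{L}(\mathcal{H}_R)$. Then $$\mathcal{O}(\mathcal{N})=\frac1d\,\mathrm{Tr}(K_0^\dagger K_0)=\frac1d\,\|J^{\mathcal{N}}_{RB}\|,$$ where $\|\cdot\|$ is the operator (spectral) norm, and the maximum is attained precisely by the density operators $\Lambda_{RA}$ whose support lies in the span of $\{|K_i^\dagger\rangle_{RA}: \mathrm{Tr}(K_i^\dagger K_i)=\mathrm{Tr}(K_0^\dagger K_0)\}$.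
   Context: Choi–Jamiołkowski operator: $J^{\mathcal{N}}_{RB}=\sum_{i,j}|i\rangle\langle j|_R\otimes\mathcal{N}(|i\rangle\langle j|)$. Operator–ket duality: for a linear operator $K$ on $\mathbb{C}^d$, $|K\rangle:=\sum_j |j\rangle\otimes K|j\rangle$; in particular $|K^\dagger\rangle_{RA}:=\sum_j|j\rangle_R\otimes K^\dagger|j\rangle_A$. Standard Kraus decomposition: take an eigendecomposition $J^{\mathcal{N}}_{RB}=\sum_i e_i|L_i\rangle\langle L_i|$ with $e_0\ge e_1\ge\dots\ge0$ and $\{|L_i\rangle\}$ orthonormal, let $L_i$ be the operator with $|L_i\rangle=\sum_j|j\rangle\otimes L_i|j\rangle$, and set $K_i=\sqrt{e_i}L_i$; then $\mathcal{N}(O)=\sum_iK_iOK_i^\dagger$, $\mathrm{Tr}(K_i^\dagger K_j)=0$ for $i\neq j$ and $\mathrm{Tr}(K_i^\dagger K_i)=e_i$. *)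

theory Defs
  imports Complex_Main "Jordan_Normal_Form.Matrix"
begin

(* Conventions: C^d has standard basis e_0..e_{d-1}; C^d (x) C^d = C^(d*d) with
   |i>|j> the basis vector of index i*d + j (first factor = R, second = A or B). *)

definition mtrace :: "complex mat \<Rightarrow> complex" where
  "mtrace A = (\<Sum>i<dim_row A. A $$ (i,i))"

definition cadj :: "complex mat \<Rightarrow> complex mat" where
  "cadj A = mat (dim_col A) (dim_row A) (\<lambda>(i,j). cnj (A $$ (j,i)))"

definition sandwich :: "complex vec \<Rightarrow> complex mat \<Rightarrow> complex vec \<Rightarrow> complex" where
  "sandwich v A w = (\<Sum>i<dim_vec v. \<Sum>j<dim_vec w. cnj (v $ i) * A $$ (i,j) * w $ j)"

definition cinner :: "complex vec \<Rightarrow> complex vec \<Rightarrow> complex" where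
  "cinner v w = (\<Sum>i<dim_vec v. cnj (v $ i) * w $ i)"

definition vnorm :: "complex vec \<Rightarrow> real" where
  "vnorm v = sqrt (\<Sum>i<dim_vec v. (cmod (v $ i))\<^sup>2)"

definition psd :: "nat \<Rightarrow> complex mat \<Rightarrow> bool" where
  "psd n A \<longleftrightarrow> A \<in> carrier_mat n n \<and>
     (\<forall>v \<in> carrier_vec n. Im (sandwich v A v) = 0 \<and> Re (sandwich v A v) \<ge> 0)"

definition density :: "nat \<Rightarrow> complex mat \<Rightarrow> bool" where
  "density n \<rho> \<longleftrightarrow> psd n \<rho> \<and> mtrace \<rho> = 1"

definition opnorm :: "complex mat \<Rightarrow> real" where
  "opnorm A = Sup {vnorm (A *\<^sub>v v) | v. v \<in> carrier_vec (dim_col A) \<and> vnorm v = 1}"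

definition unit_mat :: "nat \<Rightarrow> nat \<Rightarrow> nat \<Rightarrow> complex mat" where
  "unit_mat d i j = mat d d (\<lambda>(x,y). if x = i \<and> y = j then 1 else 0)"

(* (i,j) block of a (k*d) x (k*d) matrix, i.e. the d x d operator rho_ij with
   rho = sum_{i,j} |i><j| (x) rho_ij *)
definition block :: "nat \<Rightarrow> complex mat \<Rightarrow> nat \<Rightarrow> nat \<Rightarrow> complex mat" where
  "block d \<rho> i j = mat d d (\<lambda>(x,y). \<rho> $$ (i*d + x, j*d + y))"

(* (I_k (x) N)(rho) = sum_{i,j} |i><j| (x) N(rho_ij) *)
definition id_tensor :: "nat \<Rightarrow> nat \<Rightarrow> (complex mat \<Rightarrow> complex mat) \<Rightarrow> complex mat \<Rightarrow> complex mat" where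
  "id_tensor k d N \<rho> = mat (k*d) (k*d)
     (\<lambda>(a,b). N (block d \<rho> (a div d) (b div d)) $$ (a mod d, b mod d))"

definition quantum_channel :: "nat \<Rightarrow> (complex mat \<Rightarrow> complex mat) \<Rightarrow> bool" where
  "quantum_channel d N \<longleftrightarrow>
     (\<forall>A \<in> carrier_mat d d. N A \<in> carrier_mat d d) \<and>
     (\<forall>A \<in> carrier_mat d d. \<forall>B \<in> carrier_mat d d. N (A + B) = N A + N B) \<and>
     (\<forall>A \<in> carrier_mat d d. \<forall>c. N (c \<cdot>\<^sub>m A) = c \<cdot>\<^sub>m N A) \<and>
     (\<forall>k \<rho>. k > 0 \<longrightarrow> psd (k*d) \<rho> \<longrightarrow> psd (k*d) (id_tensor k d N \<rho>)) \<and>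
     (\<forall>A \<in> carrier_mat d d. mtrace (N A) = mtrace A)"

definition choi :: "nat \<Rightarrow> (complex mat \<Rightarrow> complex mat) \<Rightarrow> complex mat" where
  "choi d N = mat (d*d) (d*d)
     (\<lambda>(a,b). N (unit_mat d (a div d) (b div d)) $$ (a mod d, b mod d))"

(* operator-ket duality: |K> = sum_j |j> (x) K|j>, so entry j*d + x is K(x,j) *)
definition opket :: "nat \<Rightarrow> complex mat \<Rightarrow> complex vec" where
  "opket d K = vec (d*d) (\<lambda>a. K $$ (a mod d, a div d))"

definition ket_op :: "nat \<Rightarrow> complex vec \<Rightarrow> complex mat" where
  "ket_op d v = mat d d (\<lambda>(x,j). v $ (j*d + x))"

definition max_ent :: "nat \<Rightarrow> complex vec" where
  "max_ent d = vec (d*d) (\<lambda>a. if a div d = a mod d then complex_of_real (1 / sqrt (real d)) else 0)"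

definition ent_fid :: "nat \<Rightarrow> (complex mat \<Rightarrow> complex mat) \<Rightarrow> complex mat \<Rightarrow> complex" where
  "ent_fid d N \<rho> = sandwich (max_ent d) (id_tensor d d N \<rho>) (max_ent d)"

(* O(N): maximal value over density operators rho_RA (the values are real) *)
definition chan_O :: "nat \<Rightarrow> (complex mat \<Rightarrow> complex mat) \<Rightarrow> real" where
  "chan_O d N = Sup {Re (ent_fid d N \<rho>) | \<rho>. density (d*d) \<rho>}"

definition support :: "nat \<Rightarrow> complex mat \<Rightarrow> complex vec set" where
  "support n A = {A *\<^sub>v v | v. v \<in> carrier_vec n}"

definition span_of :: "nat \<Rightarrow> (nat \<Rightarrow> complex vec) \<Rightarrow> nat set \<Rightarrow> complex vec set" where
  "span_of n s I = {w \<in> carrier_vec n. \<exists>c :: nat \<Rightarrow> complex.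
      \<forall>a < n. w $ a = (\<Sum>i\<in>I. c i * s i $ a)}"

(* standard Kraus decomposition data: eigendecomposition J = sum_i e_i |L_i><L_i|,
   e_0 >= e_1 >= ... >= 0, {L_i} orthonormal (i < d*d). *)
definition std_eigdec :: "nat \<Rightarrow> (complex mat \<Rightarrow> complex mat) \<Rightarrow> (nat \<Rightarrow> real) \<Rightarrow> (nat \<Rightarrow> complex vec) \<Rightarrow> bool" where
  "std_eigdec d N e L \<longleftrightarrow>
     (\<forall>i < d*d. L i \<in> carrier_vec (d*d)) \<and>
     (\<forall>i < d*d. \<forall>j < d*d. cinner (L i) (L j) = (if i = j then 1 else 0)) \<and>
     (\<forall>i j. i \<le> j \<longrightarrow> j < d*d \<longrightarrow> e j \<le> e i) \<and>
     (\<forall>i < d*d. e i \<ge> 0) \<and>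
     (\<forall>a < d*d. \<forall>b < d*d. choi d N $$ (a,b) =
        (\<Sum>i<d*d. complex_of_real (e i) * L i $ a * cnj (L i $ b)))"

definition kraus_of :: "nat \<Rightarrow> (nat \<Rightarrow> real) \<Rightarrow> (nat \<Rightarrow> complex vec) \<Rightarrow> nat \<Rightarrow> complex mat" where
  "kraus_of d e L i = complex_of_real (sqrt (e i)) \<cdot>\<^sub>m ket_op d (L i)"

end

theory Submission
  imports Defs "Jordan_Normal_Form.Determinant"
begin

lemma sum_blocks: fixes k d :: nat shows "(\<Sum>a<k*d. f a) = (\<Sum>i<k. \<Sum>x<d. f (i*d+x))"
proof (induction k)
  case 0 then show ?case by simp
next
  case (Suc k)
  have "(\<Sum>a<Suc k*d. f a) = (\<Sum>a<k*d. f a) + (\<Sum>a\<in>{k*d..<k*d+d}. f a)"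
    by (simp add: add.commute sum.atLeastLessThan_concat[symmetric] lessThan_atLeast0)
  also have "(\<Sum>a\<in>{k*d..<k*d+d}. f a) = (\<Sum>x<d. f (k*d+x))"
    using sum.shift_bounds_nat_ivl[of f 0 "k*d" d] by (simp add: lessThan_atLeast0 ac_simps)
  finally show ?case using Suc by simp
qed

definition qf :: "nat \<Rightarrow> complex mat \<Rightarrow> (nat \<Rightarrow> complex) \<Rightarrow> (nat \<Rightarrow> complex) \<Rightarrow> complex" where
  "qf n A f g = (\<Sum>i<n. \<Sum>j<n. cnj (f i) * A $$ (i,j) * g j)"

lemma sandwich_vec: "sandwich (vec n f) A (vec n g) = qf n A f g"
  unfolding sandwich_def qf_def by simp

lemma psd_qf: assumes "psd n A" shows "Im (qf n A f f) = 0 \<and> Re (qf n A f f) \<ge> 0"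
  using assms unfolding psd_def by (metis sandwich_vec vec_carrier)

lemma qf_expand: "qf n A (\<lambda>a. f a + s * g a) (\<lambda>a. f a + s * g a)
   = qf n A f f + s * qf n A f g + cnj s * qf n A g f + cnj s * s * qf n A g g"
  unfolding qf_def by (simp add: sum.distrib sum_distrib_left algebra_simps)

lemma inv_swap:
  fixes g h :: "nat \<Rightarrow> nat \<Rightarrow> complex"
  assumes "\<forall>i<n. \<forall>j<n. (\<Sum>a<n. g i a * h a j) = (if i = j then 1 else 0)"
  shows "\<forall>a<n. \<forall>b<n. (\<Sum>k<n. h a k * g k b) = (if a = b then 1 else 0)"
proof -
  let ?A = "mat n n (\<lambda>(i,a). g i a)" and ?B = "mat n n (\<lambda>(a,j). h a j)"
  have AB: "?A * ?B = 1\<^sub>m n"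
  proof (rule eq_matI)
    fix i j assume "i < dim_row (1\<^sub>m n)" "j < dim_col (1\<^sub>m n)"
    then have ij: "i < n" "j < n" by auto
    have "(?A * ?B) $$ (i,j) = (\<Sum>a<n. g i a * h a j)"
      using ij by (simp add: scalar_prod_def row_def col_def atLeast0LessThan)
    then show "(?A * ?B) $$ (i,j) = 1\<^sub>m n $$ (i,j)" using assms ij by simp
  qed auto
  have BA: "?B * ?A = 1\<^sub>m n" by (rule mat_mult_left_right_inverse[OF _ _ AB]) auto
  show ?thesis
  proof (intro allI impI)
    fix a b assume ab: "a < n" "b < n"
    have "(\<Sum>k<n. h a k * g k b) = (?B * ?A) $$ (a,b)"
      using ab by (simp add: scalar_prod_def row_def col_def atLeast0LessThan)
    also have "\<dots> = (if a = b then 1 else 0)" unfolding BA using ab by simp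
    finally show "(\<Sum>k<n. h a k * g k b) = (if a = b then 1 else 0)" .
  qed
qed

lemma quad_zero:
  fixes B B' Q :: complex
  assumes H: "\<And>s. Im (s*B + cnj s*B' + cnj s*s*Q) = 0 \<and> 0 \<le> Re (s*B + cnj s*B' + cnj s*s*Q)"
    and Q: "Im Q = 0" "Re Q \<ge> 0"
  shows "B = 0"
proof -
  from H[of 1] Q have 1: "Im B + Im B' = 0" by simp
  from H[of \<i>] Q have 2: "Re B - Re B' = 0" by simp
  define t where "t = 1 / (Re Q + 1)"
  have t: "t > 0" "t * Re Q < 1" using Q unfolding t_def by (auto simp: field_simps)
  obtain x y where B: "B = Complex x y" by (metis complex.exhaust)
  have B': "B' = Complex x (-y)" using 1 2 B by (simp add: complex_eq_iff)
  from H[of "complex_of_real (-t) * cnj B"] Q B B'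
  have "0 \<le> -2*t*(x^2+y^2) + t^2*(x^2+y^2)*Re Q"
    by (simp add: algebra_simps power2_eq_square)
  then have "0 \<le> t*(x^2+y^2)*(t*Re Q - 2)" by (simp add: algebra_simps power2_eq_square)
  moreover have "t*Re Q - 2 < 0" using t by simp
  ultimately have "t*(x^2+y^2) \<le> 0"
    by (metis linorder_not_le mult_pos_neg)
  then have "x^2+y^2 \<le> 0" using t by (simp add: mult_le_0_iff)
  then have "x = 0" "y = 0" by (smt (verit) power2_less_eq_zero_iff sum_power2_ge_zero zero_le_power2)+
  then show ?thesis using B by (simp add: complex_eq_iff)
qed

lemma psd_kernel: assumes "psd n A" "qf n A f f = 0" shows "qf n A f g = 0"
proof (rule quad_zero[of _ "qf n A g f" "qf n A g g"])
  fix s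
  show "Im (s * qf n A f g + cnj s * qf n A g f + cnj s * s * qf n A g g) = 0 \<and>
          0 \<le> Re (s * qf n A f g + cnj s * qf n A g f + cnj s * s * qf n A g g)"
    using psd_qf[OF assms(1), of "\<lambda>a. f a + s * g a"] assms(2) by (simp add: qf_expand)
  show "Im (qf n A g g) = 0" "0 \<le> Re (qf n A g g)" using psd_qf[OF assms(1)] by auto
qed

lemma sum_rot3: "(\<Sum>a\<in>A. \<Sum>k\<in>B. \<Sum>j\<in>C. X a k j) = (\<Sum>k\<in>B. \<Sum>j\<in>C. \<Sum>a\<in>A. X a k j)"
proof -
  have "(\<Sum>a\<in>A. \<Sum>k\<in>B. \<Sum>j\<in>C. X a k j) = (\<Sum>k\<in>B. \<Sum>a\<in>A. \<Sum>j\<in>C. X a k j)"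
    by (rule sum.swap)
  also have "\<dots> = (\<Sum>k\<in>B. \<Sum>j\<in>C. \<Sum>a\<in>A. X a k j)"
    by (rule sum.cong[OF refl]) (rule sum.swap)
  finally show ?thesis .
qed

lemma norm_comb:
  fixes f :: "nat \<Rightarrow> nat \<Rightarrow> complex" and z :: "nat \<Rightarrow> complex"
  assumes orth: "\<forall>i<n. \<forall>j<n. (\<Sum>a<n. cnj (f i a) * f j a) = (if i=j then 1 else 0)"
  shows "(\<Sum>a<n. (cmod (\<Sum>k<n. z k * f k a))^2) = (\<Sum>k<n. (cmod (z k))^2)"
proof -
  have "complex_of_real (\<Sum>a<n. (cmod (\<Sum>k<n. z k * f k a))^2)
      = (\<Sum>a<n. cnj (\<Sum>k<n. z k * f k a) * (\<Sum>j<n. z j * f j a))"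
    unfolding of_real_sum complex_norm_square by (intro sum.cong refl) (rule mult.commute)
  also have "\<dots> = (\<Sum>a<n. \<Sum>k<n. \<Sum>j<n. cnj (z k) * z j * (cnj (f k a) * f j a))"
    by (simp add: cnj_sum sum_distrib_left sum_distrib_right algebra_simps)
  also have "\<dots> = (\<Sum>k<n. \<Sum>j<n. \<Sum>a<n. cnj (z k) * z j * (cnj (f k a) * f j a))"
    by (rule sum_rot3)
  also have "\<dots> = (\<Sum>k<n. \<Sum>j<n. cnj (z k) * z j * (if k = j then 1 else 0))"
    using orth by (simp add: sum_distrib_left[symmetric])
  also have "\<dots> = (\<Sum>k<n. cnj (z k) * z k)"
    by (simp add: if_distrib cong: if_cong)
  also have "\<dots> = complex_of_real (\<Sum>k<n. (cmod (z k))^2)"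
    unfolding of_real_sum complex_norm_square by (intro sum.cong refl) (rule mult.commute)
  finally show ?thesis using of_real_eq_iff by blast
qed

lemma parseval:
  fixes f :: "nat \<Rightarrow> nat \<Rightarrow> complex" and v :: "nat \<Rightarrow> complex"
  assumes compl: "\<forall>a<n. \<forall>b<n. (\<Sum>k<n. f k a * cnj (f k b)) = (if a=b then 1 else 0)"
  shows "(\<Sum>k<n. (cmod (\<Sum>b<n. cnj (f k b) * v b))^2) = (\<Sum>a<n. (cmod (v a))^2)"
proof -
  have "complex_of_real (\<Sum>k<n. (cmod (\<Sum>b<n. cnj (f k b) * v b))^2)
      = (\<Sum>k<n. cnj (\<Sum>a<n. cnj (f k a) * v a) * (\<Sum>b<n. cnj (f k b) * v b))"
    unfolding of_real_sum complex_norm_square by (intro sum.cong refl) (rule mult.commute)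
  also have "\<dots> = (\<Sum>k<n. \<Sum>a<n. \<Sum>b<n. cnj (v a) * v b * (f k a * cnj (f k b)))"
    by (simp add: cnj_sum sum_distrib_left sum_distrib_right algebra_simps)
  also have "\<dots> = (\<Sum>a<n. \<Sum>b<n. \<Sum>k<n. cnj (v a) * v b * (f k a * cnj (f k b)))"
    by (rule sum_rot3)
  also have "\<dots> = (\<Sum>a<n. \<Sum>b<n. cnj (v a) * v b * (if a = b then 1 else 0))"
    using compl by (simp add: sum_distrib_left[symmetric])
  also have "\<dots> = (\<Sum>a<n. cnj (v a) * v a)"
    by (simp add: if_distrib cong: if_cong)
  also have "\<dots> = complex_of_real (\<Sum>a<n. (cmod (v a))^2)"
    unfolding of_real_sum complex_norm_square by (intro sum.cong refl) (rule mult.commute)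
  finally show ?thesis using of_real_eq_iff by blast
qed

lemma weights:
  fixes e r :: "nat \<Rightarrow> real"
  assumes "n > 0" "\<forall>k<n. e k \<le> e 0" "\<forall>k<n. r k \<ge> 0" "(\<Sum>k<n. r k) = 1"
  shows "(\<Sum>k<n. e k * r k) \<le> e 0 \<and>
         ((\<Sum>k<n. e k * r k) = e 0 \<longleftrightarrow> (\<forall>k<n. e k \<noteq> e 0 \<longrightarrow> r k = 0))"
proof -
  have e0: "e 0 = (\<Sum>k<n. e 0 * r k)" using assms(4) by (simp add: sum_distrib_left[symmetric])
  have eq: "e 0 - (\<Sum>k<n. e k * r k) = (\<Sum>k<n. (e 0 - e k) * r k)"
  proof -
    have "(\<Sum>k<n. (e 0 - e k) * r k) = (\<Sum>k<n. e 0 * r k) - (\<Sum>k<n. e k * r k)"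
      by (simp add: sum_subtractf left_diff_distrib)
    then show ?thesis using e0 by linarith
  qed
  have nn: "\<forall>k\<in>{..<n}. 0 \<le> (e 0 - e k) * r k" using assms by simp
  have ge: "(\<Sum>k<n. (e 0 - e k) * r k) \<ge> 0" by (rule sum_nonneg) (use nn in blast)
  have iff: "(\<Sum>k<n. (e 0 - e k) * r k) = 0 \<longleftrightarrow> (\<forall>k<n. e k \<noteq> e 0 \<longrightarrow> r k = 0)"
  proof
    assume z: "(\<Sum>k<n. (e 0 - e k) * r k) = 0"
    have "\<forall>k\<in>{..<n}. (e 0 - e k) * r k = 0"
      using sum_nonneg_eq_0_iff[of "{..<n}" "\<lambda>k. (e 0 - e k) * r k"] nn z by blast
    then show "\<forall>k<n. e k \<noteq> e 0 \<longrightarrow> r k = 0"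
    proof (intro allI impI)
      fix k assume A: "\<forall>k\<in>{..<n}. (e 0 - e k) * r k = 0" and k: "k < n" "e k \<noteq> e 0"
      then have "(e 0 - e k) * r k = 0" by blast
      moreover have "e 0 - e k \<noteq> 0" using k by simp
      ultimately show "r k = 0" by simp
    qed
  next
    assume h: "\<forall>k<n. e k \<noteq> e 0 \<longrightarrow> r k = 0"
    then have "\<forall>k\<in>{..<n}. (e 0 - e k) * r k = 0" by auto
    then show "(\<Sum>k<n. (e 0 - e k) * r k) = 0" by (rule sum.neutral)
  qed
  have A1: "(\<Sum>k<n. e k * r k) \<le> e 0" using eq ge by linarith
  have A2: "(\<Sum>k<n. e k * r k) = e 0 \<longleftrightarrow> (\<Sum>k<n. (e 0 - e k) * r k) = 0" using eq by linarith
  show ?thesis using A1 A2 iff by blast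
qed

lemma chan_lin:
  assumes qc: "quantum_channel d N" and A: "A \<in> carrier_mat d d" and pq: "p < d" "q < d"
  shows "N A $$ (p,q) = (\<Sum>x<d. \<Sum>y<d. A $$ (x,y) * N (unit_mat d x y) $$ (p,q))"
proof -
  from qc have car: "\<forall>A\<in>carrier_mat d d. N A \<in> carrier_mat d d"
    and add: "\<forall>A\<in>carrier_mat d d. \<forall>B\<in>carrier_mat d d. N (A + B) = N A + N B"
    and sc: "\<forall>A\<in>carrier_mat d d. \<forall>c. N (c \<cdot>\<^sub>m A) = c \<cdot>\<^sub>m N A"
    unfolding quantum_channel_def by auto
  define P where "P S = mat d d (\<lambda>(x,y). if (x,y) \<in> S then A $$ (x,y) else 0)" for S
  have Pc: "P S \<in> carrier_mat d d" for S unfolding P_def by auto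
  have Uc: "unit_mat d x y \<in> carrier_mat d d" for x y unfolding unit_mat_def by auto
  have ind: "finite S \<Longrightarrow> S \<subseteq> {..<d} \<times> {..<d} \<Longrightarrow> (\<forall>p<d. \<forall>q<d. N (P S) $$ (p,q)
     = (\<Sum>(x,y)\<in>S. A $$ (x,y) * N (unit_mat d x y) $$ (p,q)))" for S
  proof (induction S rule: finite_induct)
    case empty
    have "P {} = 0 \<cdot>\<^sub>m (0\<^sub>m d d)" unfolding P_def by (rule eq_matI) auto
    moreover have "N (0 \<cdot>\<^sub>m (0\<^sub>m d d)) = 0 \<cdot>\<^sub>m N (0\<^sub>m d d)" using sc zero_carrier_mat by blast
    ultimately have "N (P {}) = 0 \<cdot>\<^sub>m N (0\<^sub>m d d)" by simp
    moreover have "N (0\<^sub>m d d) \<in> carrier_mat d d" using car by auto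
    ultimately show ?case by auto
  next
    case (insert s S)
    obtain x0 y0 where s: "s = (x0,y0)" by force
    have x0: "x0 < d" "y0 < d" using insert.prems s by auto
    have "P (insert s S) = P S + A $$ (x0,y0) \<cdot>\<^sub>m unit_mat d x0 y0"
      unfolding P_def unit_mat_def s by (rule eq_matI) (use insert.hyps s in auto)
    then have NP: "N (P (insert s S)) = N (P S) + A $$ (x0,y0) \<cdot>\<^sub>m N (unit_mat d x0 y0)"
      using add sc Pc Uc by auto
    have c1: "N (P S) \<in> carrier_mat d d" "N (unit_mat d x0 y0) \<in> carrier_mat d d"
      using car Pc Uc by auto
    show ?case
    proof (intro allI impI)
      fix p q assume pq: "p < d" "q < d"
      have "N (P (insert s S)) $$ (p,q) = N (P S) $$ (p,q) + A $$ (x0,y0) * N (unit_mat d x0 y0) $$ (p,q)"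
        unfolding NP using c1 pq by simp
      also have "\<dots> = (\<Sum>(x,y)\<in>S. A $$ (x,y) * N (unit_mat d x y) $$ (p,q)) + A $$ (x0,y0) * N (unit_mat d x0 y0) $$ (p,q)"
        using insert.IH insert.prems pq by auto
      also have "\<dots> = (\<Sum>(x,y)\<in>insert s S. A $$ (x,y) * N (unit_mat d x y) $$ (p,q))"
        using insert.hyps s by simp
      finally show "N (P (insert s S)) $$ (p,q) = (\<Sum>(x,y)\<in>insert s S. A $$ (x,y) * N (unit_mat d x y) $$ (p,q))" .
    qed
  qed
  have PA: "P ({..<d} \<times> {..<d}) = A" unfolding P_def by (rule eq_matI) (use A in auto)
  have fin: "finite ({..<d} \<times> {..<d})" by simp
  have "N A $$ (p,q) = (\<Sum>(x,y)\<in>{..<d} \<times> {..<d}. A $$ (x,y) * N (unit_mat d x y) $$ (p,q))"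
    using ind[OF fin subset_refl] pq unfolding PA by blast
  then show ?thesis by (simp only: sum.cartesian_product)
qed

lemma delta3:
  fixes F :: "nat \<Rightarrow> nat \<Rightarrow> nat \<Rightarrow> complex"
  assumes "i < d"
  shows "(\<Sum>x<d. \<Sum>j<d. \<Sum>y<d. if i = x then (if j = y then F x j y else 0) else 0) = (\<Sum>j<d. F i j j)"
proof -
  have "(\<Sum>j<d. \<Sum>y<d. if i = x then (if j = y then F x j y else 0) else 0)
      = (if x = i then (\<Sum>j<d. F x j j) else 0)" for x
    by (cases "x = i") (simp_all add: sum.delta sum.delta')
  then have "(\<Sum>x<d. \<Sum>j<d. \<Sum>y<d. if i = x then (if j = y then F x j y else 0) else 0)
      = (\<Sum>x<d. if x = i then (\<Sum>j<d. F x j j) else 0)" by simp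
  also have "\<dots> = (\<Sum>j<d. F i j j)" using assms by (simp add: sum.delta)
  finally show ?thesis .
qed

theorem theorem1:
  fixes d :: nat and N :: "complex mat \<Rightarrow> complex mat"
    and e :: "nat \<Rightarrow> real" and L :: "nat \<Rightarrow> complex vec"
  assumes "d \<ge> 1"
    and "quantum_channel d N"
    and "std_eigdec d N e L"
  defines "K \<equiv> kraus_of d e L"
  shows "(\<forall>\<rho>. density (d*d) \<rho> \<longrightarrow> Re (ent_fid d N \<rho>) \<le> chan_O d N)
    \<and> chan_O d N = Re (mtrace (cadj (K 0) * K 0)) / real d
    \<and> chan_O d N = opnorm (choi d N) / real d
    \<and> {\<Lambda>. density (d*d) \<Lambda> \<and> Re (ent_fid d N \<Lambda>) = chan_O d N}
      = {\<Lambda>. density (d*d) \<Lambda> \<and>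
           support (d*d) \<Lambda> \<subseteq> span_of (d*d) (\<lambda>i. opket d (cadj (K i)))
             {i. i < d*d \<and> mtrace (cadj (K i) * K i) = mtrace (cadj (K 0) * K 0)}}"
proof -
  define n where "n = d*d"
  have d0: "d > 0" using assms(1) by simp
  have n0: "n > 0" using d0 unfolding n_def by simp
  from assms(3) have Lc: "\<forall>i<n. L i \<in> carrier_vec n"
    and orthL: "\<forall>i<n. \<forall>j<n. cinner (L i) (L j) = (if i = j then 1 else 0)"
    and emono: "\<forall>i j. i \<le> j \<longrightarrow> j < n \<longrightarrow> e j \<le> e i"
    and enn: "\<forall>i<n. e i \<ge> 0"
    and Jdec: "\<forall>a<n. \<forall>b<n. choi d N $$ (a,b) = (\<Sum>i<n. complex_of_real (e i) * L i $ a * cnj (L i $ b))"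
    unfolding std_eigdec_def n_def by auto
  from assms(2) have Ncar: "\<forall>A\<in>carrier_mat d d. N A \<in> carrier_mat d d"
    and Ntr: "\<forall>A\<in>carrier_mat d d. mtrace (N A) = mtrace A"
    unfolding quantum_channel_def by auto
  have e0max: "\<forall>k<n. e k \<le> e 0" using emono by auto
  define l where "l k a = L k $ a" for k a
  have orth: "\<forall>i<n. \<forall>j<n. (\<Sum>a<n. cnj (l i a) * l j a) = (if i = j then 1 else 0)"
  proof (intro allI impI)
    fix i j assume ij: "i < n" "j < n"
    then have "dim_vec (L i) = n" using Lc by auto
    then show "(\<Sum>a<n. cnj (l i a) * l j a) = (if i = j then 1 else 0)"
      using orthL ij unfolding cinner_def l_def by metis
  qed
  have compl: "\<forall>a<n. \<forall>b<n. (\<Sum>k<n. l k a * cnj (l k b)) = (if a = b then 1 else 0)"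
    using inv_swap[of n "\<lambda>i a. cnj (l i a)" "\<lambda>a j. l j a"] orth by auto
  define sw where "sw a = (a mod d) * d + a div d" for a
  have divlt: "a div d < d" if "a < n" for a
    using that unfolding n_def by (simp add: less_mult_imp_div_less)
  have sw_lt: "sw a < n" if "a < n" for a
  proof -
    have "a mod d + 1 \<le> d" using d0 by (simp add: Suc_le_eq)
    then have "(a mod d + 1) * d \<le> d * d" by (rule mult_le_mono1)
    then show ?thesis using divlt[OF that] unfolding sw_def n_def by (simp add: algebra_simps)
  qed
  have sw_div: "sw a div d = a mod d" "sw a mod d = a div d" if "a < n" for a
    using divlt[OF that] d0 unfolding sw_def by auto
  have sw_inj: "a = b" if "a < n" "b < n" "sw a = sw b" for a b
  proof -
    have "a div d = b div d" "a mod d = b mod d" using sw_div[OF that(1)] sw_div[OF that(2)] that(3) by metis+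
    then show ?thesis by (metis div_mult_mod_eq)
  qed
  have sw_blk: "sw (i*d+x) = x*d+i" if "i < d" "x < d" for i x
    using that unfolding sw_def by simp
  define m where "m k a = cnj (l k (sw a))" for k a
  have complm: "\<forall>a<n. \<forall>b<n. (\<Sum>k<n. cnj (m k a) * m k b) = (if a = b then 1 else 0)"
  proof (intro allI impI)
    fix a b assume ab: "a < n" "b < n"
    have "(\<Sum>k<n. cnj (m k a) * m k b) = (\<Sum>k<n. l k (sw a) * cnj (l k (sw b)))"
      unfolding m_def by simp
    also have "\<dots> = (if sw a = sw b then 1 else 0)" using compl sw_lt ab by auto
    also have "\<dots> = (if a = b then 1 else 0)" using sw_inj ab by auto
    finally show "(\<Sum>k<n. cnj (m k a) * m k b) = (if a = b then 1 else 0)" .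
  qed
  have orthm0: "\<forall>i<n. \<forall>j<n. (\<Sum>a<n. m i a * cnj (m j a)) = (if i = j then 1 else 0)"
    using inv_swap[of n "\<lambda>a k. cnj (m k a)" "\<lambda>k b. m k b"] complm by auto
  have orthm: "(\<Sum>a<n. cnj (m i a) * m j a) = (if i = j then 1 else 0)" if "i < n" "j < n" for i j
    using orthm0 that by (auto simp: mult.commute)
  have complm': "(\<Sum>k<n. m k a * cnj (m k b)) = (if a = b then 1 else 0)" if "a < n" "b < n" for a b
    using complm that by (auto simp: mult.commute)
  have unit_c: "unit_mat d x y \<in> carrier_mat d d" for x y unfolding unit_mat_def by auto
  have idx: "(i*d+x) div d = i" "(i*d+x) mod d = x" if "x < d" for i x
    using that by auto
  have blk_lt: "i*d+x < n" if "i < d" "x < d" for i x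
  proof -
    have "i*d+x < i*d+d" using that by simp
    also have "\<dots> = (i+1)*d" by simp
    also have "\<dots> \<le> d*d" by (rule mult_le_mono1) (use that in simp)
    finally show ?thesis unfolding n_def .
  qed
  have choi_c: "choi d N \<in> carrier_mat n n" unfolding choi_def n_def by auto
  have trJ1: "(\<Sum>a<n. choi d N $$ (a,a)) = of_nat d"
  proof -
    have "(\<Sum>a<n. choi d N $$ (a,a)) = (\<Sum>i<d. \<Sum>x<d. choi d N $$ (i*d+x, i*d+x))"
      unfolding n_def by (rule sum_blocks)
    also have "\<dots> = (\<Sum>i<d. \<Sum>x<d. N (unit_mat d i i) $$ (x, x))"
      by (intro sum.cong refl) (simp add: choi_def blk_lt[unfolded n_def] idx)
    also have "\<dots> = (\<Sum>i<d. mtrace (N (unit_mat d i i)))"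
    proof (intro sum.cong refl)
      fix i
      have "N (unit_mat d i i) \<in> carrier_mat d d" using Ncar unit_c by blast
      then show "(\<Sum>x<d. N (unit_mat d i i) $$ (x, x)) = mtrace (N (unit_mat d i i))"
        by (simp add: mtrace_def)
    qed
    also have "\<dots> = (\<Sum>i<d. mtrace (unit_mat d i i))"
      using Ntr unit_c by simp
    also have "\<dots> = (\<Sum>i<d. 1)"
      by (intro sum.cong refl) (simp add: mtrace_def unit_mat_def)
    finally show ?thesis by simp
  qed
  have trJ2: "(\<Sum>a<n. choi d N $$ (a,a)) = (\<Sum>k<n. complex_of_real (e k))"
  proof -
    have "(\<Sum>a<n. choi d N $$ (a,a)) = (\<Sum>a<n. \<Sum>k<n. complex_of_real (e k) * (cnj (l k a) * l k a))"
      using Jdec by (intro sum.cong refl) (simp add: l_def mult.commute mult.left_commute)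
    also have "\<dots> = (\<Sum>k<n. complex_of_real (e k) * (\<Sum>a<n. cnj (l k a) * l k a))"
      by (subst sum.swap) (simp add: sum_distrib_left)
    also have "\<dots> = (\<Sum>k<n. complex_of_real (e k))"
      using orth by simp
    finally show ?thesis .
  qed
  have sume: "(\<Sum>k<n. e k) = real d"
  proof -
    have "complex_of_real (\<Sum>k<n. e k) = complex_of_real (real d)"
      using trJ1 trJ2 by simp
    then show ?thesis using of_real_eq_iff by blast
  qed
  have e0pos: "e 0 > 0"
  proof (rule ccontr)
    assume "\<not> e 0 > 0"
    then have "\<forall>k<n. e k = 0" using e0max enn by force
    then have "(\<Sum>k<n. e k) = 0" by simp
    then show False using sume d0 by simp
  qed
  define c where "c = complex_of_real (1 / sqrt (real d))"
  have cc: "cnj c * c = 1 / of_nat d"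
  proof -
    have "cnj c * c = complex_of_real (1 / sqrt (real d) * (1 / sqrt (real d)))" unfolding c_def by (simp only: complex_cnj_complex_of_real of_real_mult)
    also have "1 / sqrt (real d) * (1 / sqrt (real d)) = 1 / real d"
    proof -
      have sq: "sqrt (real d) * sqrt (real d) = real d" by simp
      show ?thesis by (simp only: times_divide_times_eq sq mult_1)
    qed
    finally show ?thesis by simp
  qed
  have phi_blk: "max_ent d $ (i*d+x) = (if i = x then c else 0)" if "i < d" "x < d" for i x
    using that blk_lt[OF that] unfolding max_ent_def c_def n_def by (simp add: idx)
  define G where "G a b = (\<Sum>k<n. complex_of_real (e k) * (cnj (m k a) * m k b))" for a b
  have G_eq: "N (unit_mat d x y) $$ (i,j) = G (i*d+x) (j*d+y)"
    if "i < d" "x < d" "j < d" "y < d" for i x j y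
  proof -
    have "N (unit_mat d x y) $$ (i,j) = choi d N $$ (x*d+i, y*d+j)"
      unfolding choi_def using blk_lt[unfolded n_def] that by (simp add: idx)
    also have "\<dots> = (\<Sum>k<n. complex_of_real (e k) * l k (x*d+i) * cnj (l k (y*d+j)))"
      using Jdec blk_lt that unfolding l_def by simp
    also have "\<dots> = G (i*d+x) (j*d+y)"
      unfolding G_def m_def using that by (simp add: sw_blk mult.assoc)
    finally show ?thesis .
  qed
  have ent: "ent_fid d N \<rho> = (\<Sum>k<n. complex_of_real (e k) * qf n \<rho> (m k) (m k)) / of_nat d"
    if rc: "\<rho> \<in> carrier_mat n n" for \<rho>
  proof -
    let ?T = "id_tensor d d N \<rho>"
    have T_eq: "?T $$ (i*d+x, j*d+y) = N (block d \<rho> i j) $$ (x,y)"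
      if "i < d" "x < d" "j < d" "y < d" for i x j y
      unfolding id_tensor_def using blk_lt[unfolded n_def] that by (simp add: idx)
    have blk_c: "block d \<rho> i j \<in> carrier_mat d d" for i j unfolding block_def by auto
    have "ent_fid d N \<rho> = (\<Sum>a<d*d. \<Sum>b<d*d. cnj (max_ent d $ a) * ?T $$ (a,b) * max_ent d $ b)"
      unfolding ent_fid_def sandwich_def by (simp add: max_ent_def)
    also have "\<dots> = (\<Sum>i<d. \<Sum>x<d. \<Sum>j<d. \<Sum>y<d. cnj (max_ent d $ (i*d+x)) * ?T $$ (i*d+x, j*d+y) * max_ent d $ (j*d+y))"
      by (simp only: sum_blocks)
    also have "\<dots> = (\<Sum>i<d. \<Sum>j<d. cnj c * c * ?T $$ (i*d+i, j*d+j))"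
    proof (rule sum.cong[OF refl])
      fix i assume i: "i \<in> {..<d}"
      have "(\<Sum>x<d. \<Sum>j<d. \<Sum>y<d. cnj (max_ent d $ (i*d+x)) * ?T $$ (i*d+x, j*d+y) * max_ent d $ (j*d+y))
          = (\<Sum>x<d. \<Sum>j<d. \<Sum>y<d. (if i = x then (if j = y then cnj c * c * ?T $$ (i*d+x, j*d+y) else 0) else 0))"
        using i by (intro sum.cong refl) (simp add: phi_blk)
      also have "\<dots> = (\<Sum>j<d. cnj c * c * ?T $$ (i*d+i, j*d+j))"
        using delta3[of i d "\<lambda>x j y. cnj c * c * ?T $$ (i*d+x, j*d+y)"] i by simp
      finally show "(\<Sum>x<d. \<Sum>j<d. \<Sum>y<d. cnj (max_ent d $ (i*d+x)) * ?T $$ (i*d+x, j*d+y) * max_ent d $ (j*d+y))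
          = (\<Sum>j<d. cnj c * c * ?T $$ (i*d+i, j*d+j))" .
    qed
    also have "\<dots> = (\<Sum>i<d. \<Sum>j<d. cnj c * c * (\<Sum>x<d. \<Sum>y<d. \<rho> $$ (i*d+x, j*d+y) * G (i*d+x) (j*d+y)))"
    proof (intro sum.cong refl)
      fix i j assume ij: "i \<in> {..<d}" "j \<in> {..<d}"
      have "?T $$ (i*d+i, j*d+j) = N (block d \<rho> i j) $$ (i,j)" using ij T_eq by simp
      also have "\<dots> = (\<Sum>x<d. \<Sum>y<d. block d \<rho> i j $$ (x,y) * N (unit_mat d x y) $$ (i,j))"
        using chan_lin[OF assms(2) blk_c] ij by simp
      also have "\<dots> = (\<Sum>x<d. \<Sum>y<d. \<rho> $$ (i*d+x, j*d+y) * G (i*d+x) (j*d+y))"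
        using ij G_eq by (intro sum.cong refl) (simp add: block_def)
      finally show "cnj c * c * ?T $$ (i*d+i, j*d+j) = cnj c * c * (\<Sum>x<d. \<Sum>y<d. \<rho> $$ (i*d+x, j*d+y) * G (i*d+x) (j*d+y))"
        by simp
    qed
    also have "\<dots> = cnj c * c * (\<Sum>i<d. \<Sum>x<d. \<Sum>j<d. \<Sum>y<d. \<rho> $$ (i*d+x, j*d+y) * G (i*d+x) (j*d+y))"
      by (simp add: sum_distrib_left) (intro sum.cong refl sum.swap)
    also have "(\<Sum>i<d. \<Sum>x<d. \<Sum>j<d. \<Sum>y<d. \<rho> $$ (i*d+x, j*d+y) * G (i*d+x) (j*d+y))
        = (\<Sum>a<n. \<Sum>b<n. \<rho> $$ (a,b) * G a b)"
      unfolding n_def by (simp only: sum_blocks)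
    also have "\<dots> = (\<Sum>a<n. \<Sum>b<n. \<Sum>k<n. complex_of_real (e k) * (cnj (m k a) * \<rho> $$ (a,b) * m k b))"
      unfolding G_def by (simp add: sum_distrib_left mult.commute mult.left_commute)
    also have "\<dots> = (\<Sum>k<n. \<Sum>a<n. \<Sum>b<n. complex_of_real (e k) * (cnj (m k a) * \<rho> $$ (a,b) * m k b))"
      by (rule sum_rot3[symmetric])
    also have "\<dots> = (\<Sum>k<n. complex_of_real (e k) * qf n \<rho> (m k) (m k))"
      unfolding qf_def by (simp add: sum_distrib_left)
    finally show ?thesis using cc by simp
  qed
  define s where "s \<rho> k = qf n \<rho> (m k) (m k)" for \<rho> k
  have dens: "\<rho> \<in> carrier_mat n n \<and> psd n \<rho> \<and> mtrace \<rho> = 1" if "density n \<rho>" for \<rho>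
    using that unfolding density_def psd_def by auto
  have s_real: "Im (s \<rho> k) = 0 \<and> Re (s \<rho> k) \<ge> 0" if "density n \<rho>" for \<rho> k
    using psd_qf dens[OF that] unfolding s_def by blast
  have s_sum: "(\<Sum>k<n. s \<rho> k) = mtrace \<rho>" if "\<rho> \<in> carrier_mat n n" for \<rho>
  proof -
    have "(\<Sum>k<n. s \<rho> k) = (\<Sum>k<n. \<Sum>a<n. \<Sum>b<n. \<rho> $$ (a,b) * (m k b * cnj (m k a)))"
      unfolding s_def qf_def by (simp add: mult.commute mult.left_commute)
    also have "\<dots> = (\<Sum>a<n. \<Sum>b<n. \<Sum>k<n. \<rho> $$ (a,b) * (m k b * cnj (m k a)))"
      by (rule sum_rot3)
    also have "\<dots> = (\<Sum>a<n. \<Sum>b<n. \<rho> $$ (a,b) * (if b = a then 1 else 0))"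
      using complm' by (simp add: sum_distrib_left[symmetric])
    also have "\<dots> = (\<Sum>a<n. \<rho> $$ (a,a))"
      by (simp add: if_distrib cong: if_cong)
    also have "\<dots> = mtrace \<rho>" unfolding mtrace_def using that by simp
    finally show ?thesis .
  qed
  have ent_re: "Re (ent_fid d N \<rho>) = (\<Sum>k<n. e k * Re (s \<rho> k)) / real d"
    if "\<rho> \<in> carrier_mat n n" for \<rho>
    using ent[OF that] unfolding s_def by (simp add: Re_divide_of_nat)
  have key: "Re (ent_fid d N \<rho>) \<le> e 0 / real d \<and>
     (Re (ent_fid d N \<rho>) = e 0 / real d \<longleftrightarrow> (\<forall>k<n. e k \<noteq> e 0 \<longrightarrow> s \<rho> k = 0))"
    if rd: "density n \<rho>" for \<rho>
  proof -
    have rc: "\<rho> \<in> carrier_mat n n" and tr: "mtrace \<rho> = 1" using dens[OF rd] by auto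
    have r1: "(\<Sum>k<n. Re (s \<rho> k)) = 1"
      using s_sum[OF rc] tr by (metis Re_sum one_complex.sel)
    have W: "(\<Sum>k<n. e k * Re (s \<rho> k)) \<le> e 0 \<and>
         ((\<Sum>k<n. e k * Re (s \<rho> k)) = e 0 \<longleftrightarrow> (\<forall>k<n. e k \<noteq> e 0 \<longrightarrow> Re (s \<rho> k) = 0))"
      using weights[of n e "\<lambda>k. Re (s \<rho> k)"] n0 e0max s_real[OF rd] r1 by blast
    have sz: "Re (s \<rho> k) = 0 \<longleftrightarrow> s \<rho> k = 0" for k
      using s_real[OF rd, of k] by (simp add: complex_eq_iff)
    show ?thesis unfolding ent_re[OF rc] using W sz d0 by (auto simp: divide_right_mono)
  qed
  define \<rho>0 where "\<rho>0 = mat n n (\<lambda>(a,b). m 0 a * cnj (m 0 b))"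
  have r0c: "\<rho>0 \<in> carrier_mat n n" unfolding \<rho>0_def by auto
  have r0psd: "psd n \<rho>0" unfolding psd_def
  proof (rule conjI[OF r0c], intro ballI)
    fix v :: "complex vec" assume v: "v \<in> carrier_vec n"
    define w where "w = (\<Sum>b<n. cnj (m 0 b) * v $ b)"
    have "sandwich v \<rho>0 v = (\<Sum>a<n. \<Sum>b<n. cnj (cnj (m 0 a) * v $ a) * (cnj (m 0 b) * v $ b))"
      unfolding sandwich_def \<rho>0_def using v by (intro sum.cong refl) (auto simp: mult.commute mult.left_commute)
    also have "\<dots> = cnj w * w" unfolding w_def by (simp add: sum_product cnj_sum)
    also have "\<dots> = complex_of_real ((cmod w)^2)" unfolding complex_norm_square by (rule mult.commute)
    finally show "Im (sandwich v \<rho>0 v) = 0 \<and> Re (sandwich v \<rho>0 v) \<ge> 0" by simp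
  qed
  have r0tr: "mtrace \<rho>0 = 1"
    unfolding mtrace_def \<rho>0_def using orthm0 n0 by simp
  have r0d: "density n \<rho>0" unfolding density_def using r0psd r0tr by simp
  have s0: "s \<rho>0 k = (if k = 0 then 1 else 0)" if "k < n" for k
  proof -
    have "s \<rho>0 k = (\<Sum>a<n. \<Sum>b<n. (cnj (m k a) * m 0 a) * (cnj (m 0 b) * m k b))"
      unfolding s_def qf_def \<rho>0_def by (intro sum.cong refl) (simp add: mult.assoc)
    also have "\<dots> = (\<Sum>a<n. cnj (m k a) * m 0 a) * (\<Sum>b<n. cnj (m 0 b) * m k b)"
      by (simp add: sum_product)
    also have "\<dots> = (if k = 0 then 1 else 0)" using orthm that n0 by simp
    finally show ?thesis .
  qed
  have r0val: "Re (ent_fid d N \<rho>0) = e 0 / real d"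
    using key[OF r0d] s0 by auto
  define Ovals where "Ovals = {Re (ent_fid d N \<rho>) | \<rho>. density (d*d) \<rho>}"
  have chanO: "chan_O d N = e 0 / real d"
  proof -
    have "chan_O d N = Sup Ovals" unfolding chan_O_def Ovals_def ..
    also have "\<dots> = e 0 / real d"
    proof (rule cSup_eq_maximum)
      show "e 0 / real d \<in> Ovals" unfolding Ovals_def using r0d[unfolded n_def] r0val[symmetric] by blast
      show "\<And>y. y \<in> Ovals \<Longrightarrow> y \<le> e 0 / real d" unfolding Ovals_def using key n_def by auto
    qed
    finally show ?thesis .
  qed
  have Kc: "K i \<in> carrier_mat d d" for i unfolding K_def kraus_of_def ket_op_def by simp
  have Kent: "K i $$ (y,x) = complex_of_real (sqrt (e i)) * l i (x*d+y)" if "y < d" "x < d" for i x y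
    unfolding K_def kraus_of_def ket_op_def l_def using that by simp
  have trK: "mtrace (cadj (K i) * K i) = complex_of_real (e i)" if i: "i < n" for i
  proof -
    have "mtrace (cadj (K i) * K i) = (\<Sum>x<d. \<Sum>y<d. cnj (K i $$ (y,x)) * K i $$ (y,x))"
      unfolding mtrace_def cadj_def using Kc[of i]
      by (simp add: scalar_prod_def row_def col_def atLeast0LessThan)
    also have "\<dots> = (\<Sum>x<d. \<Sum>y<d. complex_of_real (e i) * (cnj (l i (x*d+y)) * l i (x*d+y)))"
    proof (intro sum.cong refl)
      fix x y assume xy: "x \<in> {..<d}" "y \<in> {..<d}"
      have ss: "sqrt (e i) * sqrt (e i) = e i" using enn i by simp
      have sq2: "complex_of_real (sqrt (e i)) * complex_of_real (sqrt (e i)) = complex_of_real (e i)"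
        by (simp only: of_real_mult[symmetric] ss)
      have "cnj (K i $$ (y,x)) * K i $$ (y,x)
          = (complex_of_real (sqrt (e i)) * complex_of_real (sqrt (e i))) * (cnj (l i (x*d+y)) * l i (x*d+y))"
      proof -
        have "K i $$ (y,x) = complex_of_real (sqrt (e i)) * l i (x*d+y)" using xy Kent by simp
        then show ?thesis by (simp only: complex_cnj_mult complex_cnj_complex_of_real mult_ac)
      qed
      then show "cnj (K i $$ (y,x)) * K i $$ (y,x) = complex_of_real (e i) * (cnj (l i (x*d+y)) * l i (x*d+y))"
        unfolding sq2 .
    qed
    also have "\<dots> = complex_of_real (e i) * (\<Sum>a<n. cnj (l i a) * l i a)"
      unfolding n_def by (simp only: sum_blocks sum_distrib_left)
    also have "\<dots> = complex_of_real (e i)" using orth i by simp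
    finally show ?thesis .
  qed
  have Top: "{i. i < n \<and> mtrace (cadj (K i) * K i) = mtrace (cadj (K 0) * K 0)} = {i. i < n \<and> e i = e 0}"
    using trK n0 by auto
  have opk: "opket d (cadj (K i)) $ a = complex_of_real (sqrt (e i)) * m i a" if a: "a < n" for a i
  proof -
    have "a mod d < d" using d0 by simp
    then show ?thesis
      unfolding opket_def cadj_def m_def sw_def using a divlt[OF a] Kc[of i]
      by (simp add: n_def Kent)
  qed
  have Jv: "(choi d N *\<^sub>v v) $ a = (\<Sum>k<n. (complex_of_real (e k) * (\<Sum>b<n. cnj (l k b) * v $ b)) * l k a)"
    if v: "v \<in> carrier_vec n" and a: "a < n" for v a
  proof -
    have "(choi d N *\<^sub>v v) $ a = (\<Sum>b<n. choi d N $$ (a,b) * v $ b)"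
      using v a choi_c by (simp add: scalar_prod_def row_def atLeast0LessThan)
    also have "\<dots> = (\<Sum>b<n. \<Sum>k<n. complex_of_real (e k) * l k a * cnj (l k b) * v $ b)"
      using Jdec a unfolding l_def by (simp add: sum_distrib_right)
    also have "\<dots> = (\<Sum>k<n. \<Sum>b<n. complex_of_real (e k) * l k a * cnj (l k b) * v $ b)"
      by (rule sum.swap)
    also have "\<dots> = (\<Sum>k<n. (complex_of_real (e k) * (\<Sum>b<n. cnj (l k b) * v $ b)) * l k a)"
      by (simp add: sum_distrib_left sum_distrib_right mult.commute mult.left_commute)
    finally show ?thesis .
  qed
  have vnJ: "vnorm (choi d N *\<^sub>v v) = sqrt (\<Sum>k<n. (e k)^2 * (cmod (\<Sum>b<n. cnj (l k b) * v $ b))^2)"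
    if v: "v \<in> carrier_vec n" for v
  proof -
    have "vnorm (choi d N *\<^sub>v v) = sqrt (\<Sum>a<n. (cmod (\<Sum>k<n. (complex_of_real (e k) * (\<Sum>b<n. cnj (l k b) * v $ b)) * l k a))^2)"
      unfolding vnorm_def using choi_c v Jv by simp
    also have "(\<Sum>a<n. (cmod (\<Sum>k<n. (complex_of_real (e k) * (\<Sum>b<n. cnj (l k b) * v $ b)) * l k a))^2)
        = (\<Sum>k<n. (cmod (complex_of_real (e k) * (\<Sum>b<n. cnj (l k b) * v $ b)))^2)"
      by (rule norm_comb[OF orth])
    also have "\<dots> = (\<Sum>k<n. (e k)^2 * (cmod (\<Sum>b<n. cnj (l k b) * v $ b))^2)"
      by (simp add: norm_mult power_mult_distrib)
    finally show ?thesis .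
  qed
  have pv: "(\<Sum>k<n. (cmod (\<Sum>b<n. cnj (l k b) * v $ b))^2) = (\<Sum>a<n. (cmod (v $ a))^2)" for v
    by (rule parseval[OF compl])
  define Nvals where "Nvals = {vnorm (choi d N *\<^sub>v v) | v. v \<in> carrier_vec (dim_col (choi d N)) \<and> vnorm v = 1}"
  have opn: "opnorm (choi d N) = e 0"
  proof -
    have "opnorm (choi d N) = Sup Nvals" unfolding opnorm_def Nvals_def ..
    also have "\<dots> = e 0"
    proof (rule cSup_eq_maximum)
      have L0: "L 0 \<in> carrier_vec n" using Lc n0 by simp
      have c0: "(\<Sum>b<n. cnj (l k b) * L 0 $ b) = (if k = 0 then 1 else 0)" if "k < n" for k
        using orth that n0 unfolding l_def by simp
      have "complex_of_real (\<Sum>a<n. (cmod (L 0 $ a))^2) = (\<Sum>a<n. cnj (l 0 a) * l 0 a)"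
        unfolding of_real_sum complex_norm_square l_def by (intro sum.cong refl) (rule mult.commute)
      also have "\<dots> = 1" using orth n0 by simp
      finally have "(\<Sum>a<n. (cmod (L 0 $ a))^2) = 1" using of_real_eq_1_iff by blast
      then have nL0: "vnorm (L 0) = 1" unfolding vnorm_def using L0 by simp
      have "(\<Sum>k<n. (e k)^2 * (cmod (\<Sum>b<n. cnj (l k b) * L 0 $ b))^2) = (\<Sum>k<n. if k = 0 then (e k)^2 else 0)"
        using c0 by (intro sum.cong refl) simp
      also have "\<dots> = (e 0)^2" using n0 by (simp add: sum.delta)
      finally have "vnorm (choi d N *\<^sub>v L 0) = e 0" using vnJ[OF L0] e0pos by simp
      then show "e 0 \<in> Nvals" unfolding Nvals_def using L0 nL0 choi_c by force
    next
      fix y assume "y \<in> Nvals"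
      then obtain v where v: "v \<in> carrier_vec n" "vnorm v = 1" and y: "y = vnorm (choi d N *\<^sub>v v)"
        unfolding Nvals_def using choi_c by auto
      have "(\<Sum>a<n. (cmod (v $ a))^2) = 1" using v unfolding vnorm_def by simp
      then have one: "(\<Sum>k<n. (cmod (\<Sum>b<n. cnj (l k b) * v $ b))^2) = 1" using pv by simp
      have "(\<Sum>k<n. (e k)^2 * (cmod (\<Sum>b<n. cnj (l k b) * v $ b))^2)
          \<le> (\<Sum>k<n. (e 0)^2 * (cmod (\<Sum>b<n. cnj (l k b) * v $ b))^2)"
      proof (rule sum_mono)
        fix k assume "k \<in> {..<n}"
        then have "(e k)^2 \<le> (e 0)^2" using e0max enn by (simp add: power_mono)
        then show "(e k)^2 * (cmod (\<Sum>b<n. cnj (l k b) * v $ b))^2 \<le> (e 0)^2 * (cmod (\<Sum>b<n. cnj (l k b) * v $ b))^2"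
          by (rule mult_right_mono) simp
      qed
      also have "\<dots> = (e 0)^2" using one by (simp add: sum_distrib_left[symmetric])
      finally have "y \<le> sqrt ((e 0)^2)" unfolding y vnJ[OF v(1)] by (rule real_sqrt_le_mono)
      then show "y \<le> e 0" using e0pos by simp
    qed
    finally show ?thesis .
  qed
  have qfw: "qf n \<Lambda> f (\<lambda>j. v $ j) = (\<Sum>b<n. cnj (f b) * (\<Lambda> *\<^sub>v v) $ b)"
    if "\<Lambda> \<in> carrier_mat n n" "v \<in> carrier_vec n" for \<Lambda> f v
    unfolding qf_def using that by (simp add: scalar_prod_def row_def atLeast0LessThan sum_distrib_left mult.assoc)
  have charac: "(\<forall>k<n. e k \<noteq> e 0 \<longrightarrow> s \<Lambda> k = 0) \<longleftrightarrow>
      support n \<Lambda> \<subseteq> span_of n (\<lambda>i. opket d (cadj (K i))) {i. i < n \<and> e i = e 0}"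
    if Ld: "density n \<Lambda>" for \<Lambda>
  proof -
    have Lc': "\<Lambda> \<in> carrier_mat n n" and Lpsd: "psd n \<Lambda>" using dens[OF Ld] by auto
    let ?Top = "{i. i < n \<and> e i = e 0}"
    have finTop: "finite ?Top" by simp
    show ?thesis
    proof
      assume H: "\<forall>k<n. e k \<noteq> e 0 \<longrightarrow> s \<Lambda> k = 0"
      show "support n \<Lambda> \<subseteq> span_of n (\<lambda>i. opket d (cadj (K i))) ?Top"
      proof
        fix w assume "w \<in> support n \<Lambda>"
        then obtain v where v: "v \<in> carrier_vec n" and w: "w = \<Lambda> *\<^sub>v v" unfolding support_def by auto
        have wc: "w \<in> carrier_vec n" using w Lc' v by (simp add: mult_mat_vec_carrier)
        define cw where "cw i = (\<Sum>b<n. cnj (m i b) * w $ b)" for i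
        define cf where "cf i = cw i / complex_of_real (sqrt (e i))" for i
        have zero: "cw i = 0" if "i < n" "e i \<noteq> e 0" for i
        proof -
          have "qf n \<Lambda> (m i) (m i) = 0" using H that unfolding s_def by blast
          then have "qf n \<Lambda> (m i) (\<lambda>j. v $ j) = 0" by (rule psd_kernel[OF Lpsd])
          then show ?thesis unfolding cw_def w using qfw[OF Lc' v] by simp
        qed
        have "w $ a = (\<Sum>i\<in>?Top. cf i * opket d (cadj (K i)) $ a)" if a: "a < n" for a
        proof -
          have "(\<Sum>i\<in>?Top. cf i * opket d (cadj (K i)) $ a) = (\<Sum>i\<in>?Top. cw i * m i a)"
          proof (rule sum.cong[OF refl])
            fix i assume "i \<in> ?Top"
            then have "sqrt (e i) \<noteq> 0" using e0pos by simp
            then show "cf i * opket d (cadj (K i)) $ a = cw i * m i a"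
              unfolding cf_def opk[OF a] by simp
          qed
          also have "\<dots> = (\<Sum>i<n. cw i * m i a)"
            by (rule sum.mono_neutral_left) (use zero in auto)
          also have "\<dots> = (\<Sum>b<n. w $ b * (\<Sum>i<n. m i a * cnj (m i b)))"
          proof -
            have "(\<Sum>i<n. cw i * m i a) = (\<Sum>i<n. \<Sum>b<n. w $ b * (m i a * cnj (m i b)))"
              unfolding cw_def sum_distrib_right by (intro sum.cong refl) (simp only: mult_ac)
            also have "\<dots> = (\<Sum>b<n. \<Sum>i<n. w $ b * (m i a * cnj (m i b)))" by (rule sum.swap)
            also have "\<dots> = (\<Sum>b<n. w $ b * (\<Sum>i<n. m i a * cnj (m i b)))"
              by (simp only: sum_distrib_left)
            finally show ?thesis .
          qed
          also have "\<dots> = (\<Sum>b<n. w $ b * (if a = b then 1 else 0))"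
            using complm' a by simp
          also have "\<dots> = w $ a" using a by (simp add: if_distrib cong: if_cong)
          finally show ?thesis by simp
        qed
        then show "w \<in> span_of n (\<lambda>i. opket d (cadj (K i))) ?Top"
          unfolding span_of_def using wc by blast
      qed
    next
      assume S: "support n \<Lambda> \<subseteq> span_of n (\<lambda>i. opket d (cadj (K i))) ?Top"
      show "\<forall>k<n. e k \<noteq> e 0 \<longrightarrow> s \<Lambda> k = 0"
      proof (intro allI impI)
        fix k assume k: "k < n" "e k \<noteq> e 0"
        define v where "v = vec n (m k)"
        have v: "v \<in> carrier_vec n" unfolding v_def by simp
        have "\<Lambda> *\<^sub>v v \<in> support n \<Lambda>" unfolding support_def using v by blast
        then obtain cf where cf: "\<forall>a<n. (\<Lambda> *\<^sub>v v) $ a = (\<Sum>i\<in>?Top. cf i * opket d (cadj (K i)) $ a)"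
          using S unfolding span_of_def by blast
        have "s \<Lambda> k = qf n \<Lambda> (m k) (\<lambda>j. v $ j)"
          unfolding s_def qf_def v_def by (intro sum.cong refl) simp
        also have "\<dots> = (\<Sum>a<n. cnj (m k a) * (\<Lambda> *\<^sub>v v) $ a)" by (rule qfw[OF Lc' v])
        also have "\<dots> = (\<Sum>a<n. \<Sum>i\<in>?Top. cf i * complex_of_real (sqrt (e i)) * (cnj (m k a) * m i a))"
          using cf opk by (intro sum.cong refl) (simp add: sum_distrib_left mult.commute mult.left_commute)
        also have "\<dots> = (\<Sum>i\<in>?Top. cf i * complex_of_real (sqrt (e i)) * (\<Sum>a<n. cnj (m k a) * m i a))"
          by (subst sum.swap) (simp only: sum_distrib_left)
        also have "\<dots> = 0"
        proof (rule sum.neutral, rule ballI)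
          fix i assume "i \<in> ?Top"
          then have "i < n" "i \<noteq> k" using k by auto
          then show "cf i * complex_of_real (sqrt (e i)) * (\<Sum>a<n. cnj (m k a) * m i a) = 0"
            using orthm[OF k(1)] by simp
        qed
        finally show "s \<Lambda> k = 0" .
      qed
    qed
  qed
  show ?thesis
  proof (intro conjI)
    show "\<forall>\<rho>. density (d*d) \<rho> \<longrightarrow> Re (ent_fid d N \<rho>) \<le> chan_O d N"
    proof (intro allI impI)
      fix \<rho> assume "density (d*d) \<rho>"
      then show "Re (ent_fid d N \<rho>) \<le> chan_O d N" using key[of \<rho>] unfolding chanO n_def by simp
    qed
    show "chan_O d N = Re (mtrace (cadj (K 0) * K 0)) / real d"
      unfolding chanO using trK n0 by simp
    show "chan_O d N = opnorm (choi d N) / real d"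
      unfolding chanO opn ..
    show "{\<Lambda>. density (d*d) \<Lambda> \<and> Re (ent_fid d N \<Lambda>) = chan_O d N}
      = {\<Lambda>. density (d*d) \<Lambda> \<and>
           support (d*d) \<Lambda> \<subseteq> span_of (d*d) (\<lambda>i. opket d (cadj (K i)))
             {i. i < d*d \<and> mtrace (cadj (K i) * K i) = mtrace (cadj (K 0) * K 0)}}"
      unfolding n_def[symmetric] chanO Top
    proof (rule Set.set_eqI)
      fix \<Lambda>
      show "\<Lambda> \<in> {\<Lambda>. density n \<Lambda> \<and> Re (ent_fid d N \<Lambda>) = e 0 / real d} \<longleftrightarrow>
        \<Lambda> \<in> {\<Lambda>. density n \<Lambda> \<and> support n \<Lambda> \<subseteq> span_of n (\<lambda>i. opket d (cadj (K i))) {i. i < n \<and> e i = e 0}}"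
      proof (cases "density n \<Lambda>")
        case True
        have "Re (ent_fid d N \<Lambda>) = e 0 / real d \<longleftrightarrow> (\<forall>k<n. e k \<noteq> e 0 \<longrightarrow> s \<Lambda> k = 0)"
          using key[OF True] by (rule conjunct2)
        also have "\<dots> \<longleftrightarrow> support n \<Lambda> \<subseteq> span_of n (\<lambda>i. opket d (cadj (K i))) {i. i < n \<and> e i = e 0}"
          by (rule charac[OF True])
        finally show ?thesis using True by simp
      qed simp
    qed
  qed
qed

end
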